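(* Let $A$ be a regular ring and $S$ a metrizable subset of an $A$-module $M$. Then the set $\mathrm{conv}(S)=\{a_{1}x_{1}+\cdots+a_{n}x_{n}: n\ge1,\ x_{i}\in S,\ a_{i}\in B(A),\ a_1\oplus\cdots\oplus a_n=1\}$ is also a metrizable subset of $M$.
   Context: A regular ring is a commutative (unital) von Neumann regular ring. $B(A)$ is the set of idempotents of $A$; for pairwise disjoint idempotents $a_1,\dots,a_n$ ($a_ia_j=0$ for $i\ne j$), $a_1\oplus\cdots\oplus a_n$ denotes their sum. A subset $S$ of an $A$-module is metrizable if for all $x,y\in S$ the annihilator $\mathrm{Ann}(x-y)=\{a\in A: a(x-y)=0\}$ is a principal ideal of $A$. *)

theory Defs
  imports Complex_Main
begin

definition regular_ring :: "'a::comm_ring_1 itself \<Rightarrow> bool" where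
  "regular_ring _ \<longleftrightarrow> (\<forall>a::'a. \<exists>x. a * x * a = a)"

text \<open>B(A): the idempotents of A.\<close>
definition idempotents :: "'a::comm_ring_1 set" where
  "idempotents = {e. e * e = e}"

definition principal_ideal :: "'a::comm_ring_1 set \<Rightarrow> bool" where
  "principal_ideal I \<longleftrightarrow> (\<exists>g. I = {g * r | r. True})"

definition ann :: "('a::comm_ring_1 \<Rightarrow> 'b::ab_group_add \<Rightarrow> 'b) \<Rightarrow> 'b \<Rightarrow> 'a set" where
  "ann scale z = {a. scale a z = 0}"

definition metrizable :: "('a::comm_ring_1 \<Rightarrow> 'b::ab_group_add \<Rightarrow> 'b) \<Rightarrow> 'b set \<Rightarrow> bool" where
  "metrizable scale S \<longleftrightarrow> (\<forall>x\<in>S. \<forall>y\<in>S. principal_ideal (ann scale (x - y)))"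

definition conv :: "('a::comm_ring_1 \<Rightarrow> 'b::ab_group_add \<Rightarrow> 'b) \<Rightarrow> 'b set \<Rightarrow> 'b set" where
  "conv scale S = {y. \<exists>(n::nat) (a::nat \<Rightarrow> 'a) (x::nat \<Rightarrow> 'b). n \<ge> 1 \<and>
      (\<forall>i<n. x i \<in> S \<and> a i \<in> idempotents) \<and>
      (\<forall>i<n. \<forall>j<n. i \<noteq> j \<longrightarrow> a i * a j = 0) \<and>
      (\<Sum>i<n. a i) = 1 \<and>
      y = (\<Sum>i<n. scale (a i) (x i))}"

end

theory Submission
  imports Defs
begin

lemma reg_ann:
  fixes scale :: "'a::comm_ring_1 \<Rightarrow> 'b::ab_group_add \<Rightarrow> 'b"
  assumes "regular_ring TYPE('a)" "principal_ideal (ann scale z)"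
  shows "\<exists>E. E * E = E \<and> (\<forall>r. scale r z = 0 \<longleftrightarrow> r = r * E)"
proof -
  obtain g where g: "ann scale z = {g * r | r. True}" using assms(2) unfolding principal_ideal_def by blast
  obtain x where x: "g * x * g = g" using assms(1) unfolding regular_ring_def by blast
  have "(g*x)*(g*x) = g*x" using x by (metis mult.assoc)
  moreover have "scale r z = 0 \<longleftrightarrow> r = r * (g*x)" for r
  proof
    assume "scale r z = 0"
    then have "r \<in> ann scale z" by (simp add: ann_def)
    then obtain s where "r = g * s" using g by blast
    then show "r = r * (g*x)" using x by (metis mult.assoc mult.commute)
  next
    assume "r = r * (g*x)"
    then have "r = g * (x * r)" by (metis mult.assoc mult.commute)
    then have "r \<in> ann scale z" using g by blast
    then show "scale r z = 0" by (simp add: ann_def)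
  qed
  ultimately show ?thesis by blast
qed

context module begin

lemma conv_pick:
  fixes n :: nat
  assumes "\<forall>i<n. a i * a i = a i" "\<forall>i<n. \<forall>j<n. i \<noteq> j \<longrightarrow> a i * a j = 0"
    "(\<Sum>i<n. a i) = 1" "k < n"
  shows "a k *s (\<Sum>i<n. a i *s x i) = a k *s x k"
proof -
  have "a k *s (\<Sum>i<n. a i *s x i) = (\<Sum>i<n. (a k * a i) *s x i)"
    by (simp add: scale_sum_right)
  also have "\<dots> = (\<Sum>i<n. if k = i then a k *s x k else 0)"
    using assms by (intro sum.cong) auto
  also have "\<dots> = a k *s x k" using assms(4) by (simp add: sum.delta)
  finally show ?thesis .
qed

lemma diff_char:
  fixes n m :: nat
  assumes a1: "\<forall>i<n. a i * a i = a i" and a2: "\<forall>i<n. \<forall>j<n. i \<noteq> j \<longrightarrow> a i * a j = 0"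
    and a3: "(\<Sum>i<n. a i) = 1"
    and b1: "\<forall>i<m. b i * b i = b i" and b2: "\<forall>i<m. \<forall>j<m. i \<noteq> j \<longrightarrow> b i * b j = 0"
    and b3: "(\<Sum>i<m. b i) = 1"
    and y: "y = (\<Sum>i<n. a i *s x i)" and y': "y' = (\<Sum>i<m. b i *s x' i)"
    and H: "\<forall>i<n. \<forall>j<m. \<exists>E. E * E = E \<and> (\<forall>r. r *s (x i - x' j) = 0 \<longleftrightarrow> r = r * E)"
  shows "\<exists>e. e * e = e \<and> (\<forall>r. r *s (y - y') = 0 \<longleftrightarrow> r = r * e)"
proof -
  define P where "P i j E \<longleftrightarrow> E * E = E \<and> (\<forall>r. r *s (x i - x' j) = 0 \<longleftrightarrow> r = r * E)" for i j E
  define E where "E i j = (SOME E. P i j E)" for i j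
  have EP: "P i j (E i j)" if "i < n" "j < m" for i j
  proof -
    from H that have "\<exists>E. P i j E" unfolding P_def by blast
    then show ?thesis unfolding E_def by (rule someI_ex)
  qed
  define c where "c i j = a i * b j" for i j
  have F1: "c i j *s (y - y') = c i j *s (x i - x' j)" if "i < n" "j < m" for i j
  proof -
    have "c i j *s y = c i j *s x i"
      using conv_pick[OF a1 a2 a3 that(1), of x] y unfolding c_def
      by (metis mult.commute scale_scale)
    moreover have "c i j *s y' = c i j *s x' j"
      using conv_pick[OF b1 b2 b3 that(2), of x'] y' unfolding c_def
      by (metis scale_scale)
    ultimately show ?thesis by (simp add: scale_right_diff_distrib)
  qed
  have F2: "(\<Sum>i<n. \<Sum>j<m. c i j) = 1"
  proof -
    have "(\<Sum>i<n. \<Sum>j<m. c i j) = (\<Sum>i<n. a i) * (\<Sum>j<m. b j)" unfolding c_def by (simp add: sum_product)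
    then show ?thesis using a3 b3 by simp
  qed
  have F3: "c i j * c k l = (if k = i then (if l = j then c i j else 0) else 0)"
    if "i < n" "j < m" "k < n" "l < m" for i j k l
  proof -
    have eq: "c i j * c k l = (a i * a k) * (b j * b l)" unfolding c_def by (simp add: algebra_simps)
    show ?thesis unfolding eq using that a1 a2 b1 b2 by (auto simp: c_def)
  qed
  define e where "e = (\<Sum>k<n. \<Sum>l<m. c k l * E k l)"
  have F4: "c i j * e = c i j * E i j" if "i < n" "j < m" for i j
  proof -
    have "c i j * e = (\<Sum>k<n. \<Sum>l<m. (c i j * c k l) * E k l)"
      unfolding e_def by (simp add: sum_distrib_left mult.assoc)
    also have "\<dots> = (\<Sum>k<n. \<Sum>l<m. (if k = i then (if l = j then c i j * E i j else 0) else 0))"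
      using F3 that by (intro sum.cong refl) auto
    also have "\<dots> = (\<Sum>k<n. if k = i then (\<Sum>l<m. if l = j then c i j * E i j else 0) else 0)"
      by (intro sum.cong refl) auto
    also have "\<dots> = c i j * E i j" using that by (simp add: sum.delta)
    finally show ?thesis .
  qed
  have K: "r *s (y - y') = 0 \<longleftrightarrow> (\<forall>i<n. \<forall>j<m. r * c i j = r * c i j * E i j)" for r
  proof
    assume h: "r *s (y - y') = 0"
    show "\<forall>i<n. \<forall>j<m. r * c i j = r * c i j * E i j"
    proof (intro allI impI)
      fix i j assume ij: "i < n" "j < m"
      have "(r * c i j) *s (x i - x' j) = 0"
        using F1[OF ij] h by (metis mult.commute scale_scale scale_zero_right)
      then show "r * c i j = r * c i j * E i j" using EP[OF ij] unfolding P_def by blast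
    qed
  next
    assume h: "\<forall>i<n. \<forall>j<m. r * c i j = r * c i j * E i j"
    have "r *s (y - y') = (r * (\<Sum>i<n. \<Sum>j<m. c i j)) *s (y - y')" using F2 by simp
    also have "\<dots> = (\<Sum>i<n. \<Sum>j<m. (r * c i j) *s (y - y'))"
      by (simp add: sum_distrib_left scale_sum_left)
    also have "\<dots> = (\<Sum>i<n. \<Sum>j<m. (r * c i j) *s (x i - x' j))"
      using F1 by (intro sum.cong refl) (metis mult.commute scale_scale lessThan_iff)
    also have "\<dots> = 0"
    proof (intro sum.neutral ballI)
      fix i j assume "i \<in> {..<n}" "j \<in> {..<m}"
      then have ij: "i < n" "j < m" by auto
      have "(r * c i j * E i j) *s (x i - x' j) = 0" using EP[OF ij] unfolding P_def
        by (metis mult.assoc mult.commute mult.left_commute)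
      then show "(r * c i j) *s (x i - x' j) = 0" using h ij by metis
    qed
    finally show "r *s (y - y') = 0" .
  qed
  have K2: "(\<forall>i<n. \<forall>j<m. r * c i j = r * c i j * E i j) \<longleftrightarrow> r = r * e" for r
  proof
    assume h: "\<forall>i<n. \<forall>j<m. r * c i j = r * c i j * E i j"
    have "r * e = (\<Sum>k<n. \<Sum>l<m. r * c k l * E k l)"
      unfolding e_def by (simp add: sum_distrib_left mult.assoc)
    also have "\<dots> = (\<Sum>k<n. \<Sum>l<m. r * c k l)" using h by (intro sum.cong refl) auto
    also have "\<dots> = r * (\<Sum>k<n. \<Sum>l<m. c k l)" by (simp add: sum_distrib_left)
    finally show "r = r * e" using F2 by simp
  next
    assume h: "r = r * e"
    show "\<forall>i<n. \<forall>j<m. r * c i j = r * c i j * E i j"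
    proof (intro allI impI)
      fix i j assume ij: "i < n" "j < m"
      have "r * c i j = r * (c i j * e)" using h by (metis mult.assoc mult.commute)
      then show "r * c i j = r * c i j * E i j" using F4[OF ij] EP[OF ij] unfolding P_def by (simp add: mult.assoc)
    qed
  qed
  have ee: "e * e = e"
  proof -
    have "e * e = (\<Sum>k<n. \<Sum>l<m. (c k l * E k l) * e)"
      by (subst (1) e_def) (simp add: sum_distrib_right)
    also have "\<dots> = (\<Sum>k<n. \<Sum>l<m. E k l * (c k l * e))"
      by (simp add: mult_ac)
    also have "\<dots> = (\<Sum>k<n. \<Sum>l<m. c k l * E k l)"
    proof (intro sum.cong refl)
      fix k l assume "k \<in> {..<n}" "l \<in> {..<m}"
      then have kl: "k < n" "l < m" by auto
      have "E k l * E k l = E k l" using EP[OF kl] unfolding P_def by blast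
      then show "E k l * (c k l * e) = c k l * E k l" using F4[OF kl]
        by (metis mult.assoc mult.commute)
    qed
    finally show ?thesis unfolding e_def .
  qed
  show ?thesis using ee K K2 by blast
qed

end

theorem mainTheorem17:
  fixes scale :: "'a::comm_ring_1 \<Rightarrow> 'b::ab_group_add \<Rightarrow> 'b"
    and S :: "'b set"
  assumes "regular_ring TYPE('a)"
    and "module scale"
    and "metrizable scale S"
  shows "metrizable scale (conv scale S)"
  unfolding metrizable_def
proof (intro ballI)
  fix y y' assume yc: "y \<in> conv scale S" and yc': "y' \<in> conv scale S"
  obtain n a x where A: "\<forall>i<(n::nat). x i \<in> S \<and> a i \<in> idempotents"
    "\<forall>i<n. \<forall>j<n. i \<noteq> j \<longrightarrow> a i * a j = 0" "(\<Sum>i<n. a i) = 1"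
    "y = (\<Sum>i<n. scale (a i) (x i))"
    using yc unfolding conv_def by blast
  obtain m b x' where B: "\<forall>i<(m::nat). x' i \<in> S \<and> b i \<in> idempotents"
    "\<forall>i<m. \<forall>j<m. i \<noteq> j \<longrightarrow> b i * b j = 0" "(\<Sum>i<m. b i) = 1"
    "y' = (\<Sum>i<m. scale (b i) (x' i))"
    using yc' unfolding conv_def by blast
  have H: "\<forall>i<n. \<forall>j<m. \<exists>E. E * E = E \<and> (\<forall>r. scale r (x i - x' j) = 0 \<longleftrightarrow> r = r * E)"
  proof (intro allI impI)
    fix i j assume "i < n" "j < m"
    then have "x i \<in> S" "x' j \<in> S" using A(1) B(1) by auto
    then have "principal_ideal (ann scale (x i - x' j))" using assms(3) unfolding metrizable_def by blast
    then show "\<exists>E. E * E = E \<and> (\<forall>r. scale r (x i - x' j) = 0 \<longleftrightarrow> r = r * E)"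
      using reg_ann[OF assms(1)] by blast
  qed
  obtain e where e: "e * e = e" "\<forall>r. scale r (y - y') = 0 \<longleftrightarrow> r = r * e"
    using module.diff_char[OF assms(2), of n a m b y x y' x'] A B H
    unfolding idempotents_def by auto
  have "ann scale (y - y') = {e * r | r. True}"
  proof (intro set_eqI iffI)
    fix r assume "r \<in> ann scale (y - y')"
    then have "r = r * e" using e by (simp add: ann_def)
    then show "r \<in> {e * r | r. True}" by (metis (mono_tags, lifting) mem_Collect_eq mult.commute)
  next
    fix r assume "r \<in> {e * r | r. True}"
    then obtain s where "r = e * s" by blast
    then have "r = r * e" using e(1) by (metis mult.assoc mult.commute)
    then show "r \<in> ann scale (y - y')" using e by (simp add: ann_def)
  qed
  then show "principal_ideal (ann scale (y - y'))" unfolding principal_ideal_def by blast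
qed

end
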